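(* Let $V\subset\mathbb{R}^d$ be the closure of a bounded domain. There exists a constant $C>0$ such that for all $\rho^i=h_i\delta_{\gamma_i}\in\mathscr{C}_V$, $i=1,2$, $$\frac1C\,H^2(\rho^1,\rho^2)\le d_F(\rho^1,\rho^2)\le C\sqrt{h_1+h_2}\,H(\rho^1,\rho^2).$$ In particular $H$ and $d_F$ induce the same topology on $\mathscr{C}_V$.
   Context: $\mathscr{C}_V:=\{h\delta_\gamma\in\mathcal{M}(V):h\ge0,\ \gamma\in V\}$. The flat distance is $d_F(\rho^1,\rho^2):=\sup\{\int_V\varphi\,d(\rho^1-\rho^2):\varphi\in C(V),\ \|\varphi\|_\infty\le1,\ \mathrm{Lip}(\varphi)\le1\}$. The Hellinger–Kantorovich distance $H\ge0$ on $\mathscr{C}_V$ is given by $$H^2(\rho^1,\rho^2)=\begin{cases}h_1+h_2-2\sqrt{h_1h_2}\cos(|\gamma_1-\gamma_2|)&\text{if }|\gamma_1-\gamma_2|\le\pi,\\ h_1+h_2+2\sqrt{h_1h_2}&\text{otherwise.}\end{cases}$$ *)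

theory Defs
  imports "HOL-Analysis.Analysis"
begin

text \<open>A Dirac-type measure h\<delta>_\<gamma> in C_V is represented by its mass h \<ge> 0 and
  location \<gamma> \<in> V. For such measures the integral of \<phi> against
  \<rho>1 - \<rho>2 is h1 \<phi>(\<gamma>1) - h2 \<phi>(\<gamma>2).\<close>

definition flat_dist_dirac ::
  "'a::euclidean_space set \<Rightarrow> real \<Rightarrow> 'a \<Rightarrow> real \<Rightarrow> 'a \<Rightarrow> real" where
  "flat_dist_dirac V h1 g1 h2 g2 =
     Sup {h1 * \<phi> g1 - h2 * \<phi> g2 | \<phi>.
            continuous_on V \<phi> \<and> (\<forall>x\<in>V. \<bar>\<phi> x\<bar> \<le> 1) \<and> lipschitz_on 1 V \<phi>}"

definition HK_sq :: "real \<Rightarrow> 'a::euclidean_space \<Rightarrow> real \<Rightarrow> 'a \<Rightarrow> real" where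
  "HK_sq h1 g1 h2 g2 =
     (if norm (g1 - g2) \<le> pi
      then h1 + h2 - 2 * sqrt (h1 * h2) * cos (norm (g1 - g2))
      else h1 + h2 + 2 * sqrt (h1 * h2))"

definition HK :: "real \<Rightarrow> 'a::euclidean_space \<Rightarrow> real \<Rightarrow> 'a \<Rightarrow> real" where
  "HK h1 g1 h2 g2 = sqrt (HK_sq h1 g1 h2 g2)"

end

theory Submission
  imports Defs
begin
lemma sin_lb:
  fixes x :: real assumes "0 \<le> x" "x \<le> pi/2"
  shows "sin x \<ge> 2/5 * x"
proof -
  have b: "\<bar>sin x - (x - x^3/6)\<bar> \<le> x^4/24"
  proof -
    have "(\<Sum>m<4. sin_coeff m * x^m) = x - x^3/6"
      by (simp add: lessThan_nat_numeral sin_coeff_def fact_numeral)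
    then show ?thesis using Maclaurin_sin_bound[of x 4] assms by (simp add: fact_numeral)
  qed
  have p: "x \<le> 1.6" using pi_approx assms by simp
  have x2: "x*x \<le> 2.56" using mult_mono[OF p p] assms by simp
  have x3: "x * (x*x) \<le> 1.6 * 2.56" using mult_mono[OF p x2] assms by simp
  have "x^3/6 + x^4/24 = x * (x*x/6 + x*(x*x)/24)" by (simp add: eval_nat_numeral algebra_simps)
  also have "\<dots> \<le> x * (3/5)" using x2 x3 assms by (intro mult_left_mono) auto
  finally show ?thesis using b by linarith
qed

lemma cos_bounds:
  fixes d :: real assumes "0 \<le> d" "d \<le> pi"
  shows "d^2/32 \<le> 1 - cos d" "1 - cos d \<le> d^2/2"
proof -
  have c: "cos d = 1 - 2 * sin (d/2) ^ 2" using cos_double_sin[of "d/2"] by simp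
  have s: "sin (d/2) \<ge> 2/5*(d/2)" using sin_lb[of "d/2"] assms by simp
  have "(2/5*(d/2))^2 \<le> sin (d/2) ^2" using s assms by (intro power_mono) auto
  then have "d^2 \<le> 25 * sin (d/2) ^2" by (simp add: power_mult_distrib power_divide)
  moreover have "0 \<le> sin (d/2) ^2" by simp
  ultimately show "d^2/32 \<le> 1 - cos d" using c by linarith
  have "\<bar>sin (d/2)\<bar> \<le> \<bar>d/2\<bar>" by (rule abs_sin_x_le_abs_x)
  then have "sin (d/2) ^2 \<le> (d/2)^2" by (metis power2_abs abs_ge_zero power_mono)
  then show "1 - cos d \<le> d^2/2" using c by (simp add: power_divide)
qed

lemma lowerR:
  fixes a b d F :: real
  assumes "a\<ge>0" "b\<ge>0" "d\<ge>0" "F \<ge> \<bar>a^2-b^2\<bar>" "F \<ge> max (a^2) (b^2) * min 1 d"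
  shows "(if d \<le> pi then a^2+b^2 - 2*(a*b)*cos d else a^2+b^2+2*(a*b)) \<le> 11*F"
proof (cases "d \<le> pi")
  case True
  have c: "1 - cos d \<le> d^2/2" by (rule cos_bounds(2)) (use True assms in auto)
  have ab: "0 \<le> a*b" using assms by simp
  have e: "a^2+b^2 - 2*(a*b)*cos d = (a-b)^2 + 2*(a*b)*(1 - cos d)" by (simp add: algebra_simps power2_eq_square)
  have 1: "(a-b)^2 \<le> \<bar>a^2-b^2\<bar>"
  proof -
    have "(a-b)^2 = \<bar>a-b\<bar>*\<bar>a-b\<bar>" by (simp add: power2_eq_square abs_mult_self_eq)
    also have "\<dots> \<le> \<bar>a-b\<bar>*(a+b)" using assms by (intro mult_left_mono) auto
    also have "\<dots> = \<bar>(a-b)*(a+b)\<bar>" using assms by (simp add: abs_mult)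
    also have "(a-b)*(a+b) = a^2-b^2" by (simp add: algebra_simps power2_eq_square)
    finally show ?thesis .
  qed
  have 2: "2*(a*b)*(1 - cos d) \<le> (a*b) * d^2" using mult_left_mono[OF c ab] by simp
  have 3: "a*b \<le> max (a^2) (b^2)"
  proof (cases "a \<le> b")
    case True then show ?thesis using assms mult_right_mono[OF True, of b] by (simp add: power2_eq_square)
  next
    case False
    then have "a*b \<le> a*a" using assms by (intro mult_left_mono) auto
    then show ?thesis by (simp add: power2_eq_square)
  qed
  have 4: "d^2 \<le> 10 * min 1 d"
  proof (cases "d \<le> 1")
    case True then show ?thesis using assms mult_left_mono[OF True, of d] by (simp add: power2_eq_square)
  next
    case False
    have "d*d \<le> pi*pi" using mult_mono[OF \<open>d\<le>pi\<close> \<open>d\<le>pi\<close>] assms by simp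
    moreover have "pi*pi \<le> 10" using pi_approx mult_mono[of pi "3.16" pi "3.16"] by simp
    ultimately show ?thesis using False by (simp add: power2_eq_square)
  qed
  have "(a*b)*d^2 \<le> max (a^2) (b^2) * (10 * min 1 d)"
    using 3 4 ab assms by (intro mult_mono) (auto simp: le_max_iff_disj)
  then have "(a*b)*d^2 \<le> 10 * F" using assms(5) by (simp add: algebra_simps)
  then show ?thesis using True e 1 2 assms(4) by simp
next
  case False
  then have "min 1 d = 1" using pi_ge_two by simp
  have "a^2+b^2+2*(a*b) \<le> 2*(a^2+b^2)" using sum_squares_bound[of a b] by simp
  also have "\<dots> \<le> 4 * max (a^2) (b^2)" by simp
  finally show ?thesis using False \<open>min 1 d = 1\<close> assms by (simp add: max_def split: if_splits)
qed

lemma upperR: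
  fixes a b d E :: real
  assumes "a\<ge>0" "b\<ge>0" "d\<ge>0" "E \<le> a^2+b^2" "E \<le> \<bar>a^2-b^2\<bar> + min (a^2) (b^2) * d"
  shows "E \<le> 20 * sqrt (a^2+b^2) * sqrt (if d \<le> pi then a^2+b^2 - 2*(a*b)*cos d else a^2+b^2+2*(a*b))"
proof -
  define s where "s = sqrt (a^2+b^2)"
  have s0: "0 \<le> s" unfolding s_def by simp
  have as: "a \<le> s" unfolding s_def by (rule real_le_rsqrt) simp
  have bs: "b \<le> s" unfolding s_def by (rule real_le_rsqrt) simp
  have ss: "s * s = a^2+b^2" unfolding s_def by (simp flip: power2_eq_square)
  show ?thesis
  proof (cases "d \<le> pi")
    case False
    have "a^2+b^2+2*(a*b) = (a+b)^2" by (simp add: power2_eq_square algebra_simps)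
    then have H: "sqrt (a^2+b^2+2*(a*b)) = a+b" using assms by simp
    have "s \<le> a + b" unfolding s_def using assms
      by (intro real_le_lsqrt) (auto simp: power2_eq_square algebra_simps)
    then have "s * s \<le> s * (a+b)" using s0 by (intro mult_left_mono)
    moreover have "0 \<le> s * (a+b)" using s0 assms by simp
    ultimately show ?thesis using False H ss assms(4) unfolding s_def[symmetric] by simp
  next
    case True
    define Q where "Q = (a-b)^2 + 2*(a*b)*(1 - cos d)"
    have e: "a^2+b^2 - 2*(a*b)*cos d = Q" unfolding Q_def by (simp add: algebra_simps power2_eq_square)
    have c: "d^2/32 \<le> 1 - cos d" by (rule cos_bounds(1)) (use True assms in auto)
    have ab: "0 \<le> a*b" using assms by simp
    have c2: "0 \<le> 2*(a*b)*(1 - cos d)" using ab by simp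
    have Q0: "0 \<le> Q" unfolding Q_def using c2 by simp
    have H1: "\<bar>a-b\<bar> \<le> sqrt Q" unfolding Q_def using c2
      by (intro real_le_rsqrt) (simp)
    have "a^2-b^2 = (a-b)*(a+b)" by (simp add: power2_eq_square algebra_simps)
    then have "\<bar>a^2-b^2\<bar> = \<bar>a-b\<bar>*(a+b)" using assms by (simp add: abs_mult)
    also have "\<dots> \<le> sqrt Q * (2 * s)" using H1 as bs assms Q0 by (intro mult_mono) auto
    finally have T1: "\<bar>a^2-b^2\<bar> \<le> 2 * s * sqrt Q" by (simp add: mult_ac)
    have "min (a^2) (b^2) \<le> a*b"
    proof (cases "a \<le> b")
      case True
      then have "a*a \<le> a*b" using assms by (intro mult_left_mono) auto
      then show ?thesis by (simp add: power2_eq_square min_le_iff_disj)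
    next
      case False
      then have "b*b \<le> a*b" using assms by (intro mult_right_mono) auto
      then show ?thesis by (simp add: power2_eq_square min_le_iff_disj)
    qed
    then have m: "min (a^2) (b^2) * d \<le> a*b*d" using assms by (intro mult_right_mono) auto
    have "(sqrt (a*b) * d / 4)^2 \<le> Q"
    proof -
      have "(sqrt (a*b) * d / 4)^2 = 2*(a*b)*(d^2/32)" using ab by (simp add: power_mult_distrib power_divide)
      also have "\<dots> \<le> 2*(a*b)*(1 - cos d)" using c ab by (intro mult_left_mono) auto
      also have "\<dots> \<le> Q" unfolding Q_def by simp
      finally show ?thesis .
    qed
    then have "sqrt (a*b) * d / 4 \<le> sqrt Q" by (rule real_le_rsqrt)
    then have H2: "sqrt (a*b) * d \<le> 4 * sqrt Q" by simp
    have "a*b \<le> a^2+b^2" using sum_squares_bound[of a b] ab by simp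
    then have sab: "sqrt (a*b) \<le> s" unfolding s_def by (rule real_sqrt_le_mono)
    have "a*b*d = sqrt (a*b) * (sqrt (a*b) * d)" using ab by simp
    also have "\<dots> \<le> s * (4 * sqrt Q)" by (rule mult_mono[OF sab H2]) (use s0 ab assms in auto)
    finally have T2: "a*b*d \<le> 4 * s * sqrt Q" by (simp add: mult_ac)
    have "0 \<le> s * sqrt Q" using s0 Q0 by simp
    then show ?thesis using True e T1 T2 m assms(5) unfolding s_def[symmetric] by simp
  qed
qed

lemma lip_test:
  fixes g :: "'a::metric_space"
  shows "1-lipschitz_on V (\<lambda>x. min 1 (dist x g))"
proof (rule lipschitz_onI)
  fix x y assume "x \<in> V" "y \<in> V"
  have "\<bar>dist x g - dist g y\<bar> \<le> dist x y" by (rule abs_dist_diff_le)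
  then show "dist (min 1 (dist x g)) (min 1 (dist y g)) \<le> 1 * dist x y"
    by (simp add: dist_real_def dist_commute min_def split: if_splits) linarith?
qed simp

lemma elem_bound:
  fixes h1 h2 p q d :: real
  assumes "h1 \<ge> 0" "h2 \<ge> 0" "\<bar>p\<bar> \<le> 1" "\<bar>q\<bar> \<le> 1" "\<bar>p - q\<bar> \<le> d"
  shows "h1*p - h2*q \<le> h1 + h2" "h1*p - h2*q \<le> \<bar>h1-h2\<bar> + min h1 h2 * d"
proof -
  have "h1*p \<le> h1*1" using assms by (intro mult_left_mono) auto
  moreover have "h2*(-q) \<le> h2*1" using assms by (intro mult_left_mono) auto
  ultimately show "h1*p - h2*q \<le> h1 + h2" by simp
  show "h1*p - h2*q \<le> \<bar>h1-h2\<bar> + min h1 h2 * d"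
  proof (cases "h2 \<le> h1")
    case True
    have e: "h1*p - h2*q = (h1-h2)*p + h2*(p-q)" by (simp add: algebra_simps)
    have "(h1-h2)*p \<le> (h1-h2)*1" using True assms by (intro mult_left_mono) auto
    moreover have "h2*(p-q) \<le> h2*d" using assms by (intro mult_left_mono) auto
    ultimately show ?thesis using e True by simp
  next
    case False
    have e: "h1*p - h2*q = (h2-h1)*(-q) + h1*(p-q)" by (simp add: algebra_simps)
    have "(h2-h1)*(-q) \<le> (h2-h1)*1" using False assms by (intro mult_left_mono) auto
    moreover have "h1*(p-q) \<le> h1*d" using assms by (intro mult_left_mono) auto
    ultimately show ?thesis using e False by simp
  qed
qed

theorem propositionA6:
  fixes \<Omega> :: "'a::euclidean_space set"
  assumes "open \<Omega>" and "connected \<Omega>" and "\<Omega> \<noteq> {}" and "bounded \<Omega>"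
  defines "V \<equiv> closure \<Omega>"
  shows "\<exists>C>0. \<forall>h1 h2 g1 g2. h1 \<ge> 0 \<longrightarrow> h2 \<ge> 0 \<longrightarrow> g1 \<in> V \<longrightarrow> g2 \<in> V \<longrightarrow>
           (HK h1 g1 h2 g2)\<^sup>2 / C \<le> flat_dist_dirac V h1 g1 h2 g2 \<and>
           flat_dist_dirac V h1 g1 h2 g2 \<le> C * sqrt (h1 + h2) * HK h1 g1 h2 g2"
proof (intro exI[of _ 20] conjI allI impI)
  fix h1 h2 :: real and g1 g2 :: 'a
  assume h1: "h1 \<ge> 0" and h2: "h2 \<ge> 0" and g1: "g1 \<in> V" and g2: "g2 \<in> V"
  define S where "S = {h1 * \<phi> g1 - h2 * \<phi> g2 | \<phi>.
            continuous_on V \<phi> \<and> (\<forall>x\<in>V. \<bar>\<phi> x\<bar> \<le> 1) \<and> lipschitz_on 1 V \<phi>}"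
  have F: "flat_dist_dirac V h1 g1 h2 g2 = Sup S" unfolding S_def flat_dist_dirac_def by simp
  define d where "d = norm (g1 - g2)"
  have d0: "0 \<le> d" unfolding d_def by simp
  define a where "a = sqrt h1"
  define b where "b = sqrt h2"
  have a0: "0 \<le> a" and b0: "0 \<le> b" unfolding a_def b_def using h1 h2 by auto
  have ha: "h1 = a^2" and hb: "h2 = b^2" unfolding a_def b_def using h1 h2 by auto
  define X where "X = (if d \<le> pi then a^2+b^2 - 2*(a*b)*cos d else a^2+b^2+2*(a*b))"
  have HKX: "HK h1 g1 h2 g2 = sqrt X"
    unfolding HK_def HK_sq_def X_def d_def ha hb using a0 b0
    by (simp add: real_sqrt_mult)
  have X0: "0 \<le> X"
  proof (cases "d \<le> pi")
    case True
    have "a^2+b^2 - 2*(a*b)*cos d = (a-b)^2 + 2*(a*b)*(1 - cos d)"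
      by (simp add: algebra_simps power2_eq_square)
    moreover have "0 \<le> 2*(a*b)*(1 - cos d)" using a0 b0 by simp
    ultimately show ?thesis using True unfolding X_def by simp
  next
    case False then show ?thesis unfolding X_def using a0 b0 by simp
  qed
  have elem: "e \<le> h1 + h2 \<and> e \<le> \<bar>h1-h2\<bar> + min h1 h2 * d" if "e \<in> S" for e
  proof -
    obtain \<phi> where e: "e = h1 * \<phi> g1 - h2 * \<phi> g2" and c: "continuous_on V \<phi>"
      and bd: "\<forall>x\<in>V. \<bar>\<phi> x\<bar> \<le> 1" and l: "lipschitz_on 1 V \<phi>"
      using \<open>e \<in> S\<close> unfolding S_def by blast
    have "dist (\<phi> g1) (\<phi> g2) \<le> 1 * dist g1 g2" by (rule lipschitz_onD[OF l g1 g2])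
    then have "\<bar>\<phi> g1 - \<phi> g2\<bar> \<le> d" unfolding d_def by (simp add: dist_real_def dist_norm)
    then show ?thesis using elem_bound[OF h1 h2, of "\<phi> g1" "\<phi> g2" d] bd g1 g2 e by auto
  qed
  have inS: "h1 * \<phi> g1 - h2 * \<phi> g2 \<in> S" if "1-lipschitz_on V \<phi>" "\<forall>x\<in>V. \<bar>\<phi> x\<bar> \<le> 1" for \<phi>
    unfolding S_def using that lipschitz_on_continuous_on by blast
  have lc: "1-lipschitz_on V (\<lambda>_. c::real)" for c by (rule lipschitz_onI) auto
  have ne: "S \<noteq> {}" using inS[OF lc[of 0]] by auto
  have bdd: "bdd_above S" using elem by (intro bdd_aboveI[of _ "h1+h2"]) auto
  have "Sup S \<le> 20 * sqrt (h1 + h2) * HK h1 g1 h2 g2"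
  proof (rule cSup_least[OF ne])
    fix e assume "e \<in> S"
    from elem[OF this] have "e \<le> a^2 + b^2" "e \<le> \<bar>a^2-b^2\<bar> + min (a^2) (b^2) * d"
      unfolding ha hb by auto
    from upperR[OF a0 b0 d0 this] have "e \<le> 20 * sqrt (a^2+b^2) * sqrt X"
      unfolding X_def .
    then show "e \<le> 20 * sqrt (h1 + h2) * HK h1 g1 h2 g2"
      by (simp only: HKX ha[symmetric] hb[symmetric])
  qed
  then show "flat_dist_dirac V h1 g1 h2 g2 \<le> 20 * sqrt (h1 + h2) * HK h1 g1 h2 g2"
    using F by simp
  have l1: "h1 - h2 \<le> Sup S" using cSup_upper[OF inS[OF lc[of 1]] bdd] by simp
  have l2: "h2 - h1 \<le> Sup S" using cSup_upper[OF inS[OF lc[of "-1"]] bdd] by simp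
  have l3: "h1 * min 1 d \<le> Sup S"
  proof -
    have "h1 * min 1 (dist g1 g2) - h2 * min 1 (dist g2 g2) \<in> S"
      by (rule inS[of "\<lambda>x. min 1 (dist x g2)"]) (auto intro: lip_test)
    from cSup_upper[OF this bdd] show ?thesis unfolding d_def by (simp add: dist_norm)
  qed
  have l4: "h2 * min 1 d \<le> Sup S"
  proof -
    have "h1 * (- min 1 (dist g1 g1)) - h2 * (- min 1 (dist g2 g1)) \<in> S"
      by (rule inS[of "\<lambda>x. - min 1 (dist x g1)"]) (auto intro: lip_test lipschitz_on_minus)
    from cSup_upper[OF this bdd] show ?thesis unfolding d_def by (simp add: dist_norm norm_minus_commute)
  qed
  have A: "\<bar>a^2 - b^2\<bar> \<le> Sup S" using l1 l2 ha hb by auto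
  have B: "max (a^2) (b^2) * min 1 d \<le> Sup S" using l3 l4 ha hb by (auto simp: max_def)
  have "X \<le> 11 * Sup S" using lowerR[OF a0 b0 d0 A B] unfolding X_def .
  moreover have "0 \<le> Sup S" using A by linarith
  ultimately have "X / 20 \<le> Sup S" by simp
  then show "(HK h1 g1 h2 g2)\<^sup>2 / 20 \<le> flat_dist_dirac V h1 g1 h2 g2"
    using F HKX X0 by simp
qed simp

end
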